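(* Let $q$ be a prime power with $q-1=em$ for positive integers $e,m$, and let $\sigma\in\mathbb{F}_q$. For each $i=0,\dots,e-1$ let $A_i,B_i$ be $0$-$1$ matrices with rows and columns indexed by $\mathbb{F}_q$, each of whose row indexed by $0$ has a $1$ exactly in the columns indexed by elements of $D_0^e$. Assume that for each $i$ the product $A_iB_i$ is $\sigma$-circulant and $B_i$ is $\sigma_i$-circulant for some $\sigma_i\in D_i^e$. Let $C$ be the $\sigma$-circulant matrix whose row indexed by $0$ has a $1$ exactly in the columns indexed by elements of $D_0^e$. Then $\sum_{i=0}^{e-1}A_iB_i+C=mJ$, where $J$ is the $q\times q$ all-ones matrix.
   Context: For a primitive element $\gamma$ of $\mathbb{F}_q$ and $e\mid q-1$, the cyclotomic classes are $D_i^e=\gamma^i\langle\gamma^e\rangle$, $i=0,\dots,e-1$. For $\tau\in\mathbb{F}_q$, a matrix $N$ with rows and columns indexed by $\mathbb{F}_q$ is $\tau$-circulant if $N_{x,y}=N_{x-k,\,y-\tau k}$ for all $x,y,k\in\mathbb{F}_q$. *)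

theory Defs
  imports Main "HOL-Library.Cardinality"
begin

definition primitive_elem :: "'a::{finite,field} \<Rightarrow> bool" where
  "primitive_elem g \<longleftrightarrow> g \<noteq> 0 \<and> (\<forall>x. x \<noteq> 0 \<longrightarrow> (\<exists>k::nat. x = g ^ k))"

definition cyc_class :: "'a::field \<Rightarrow> nat \<Rightarrow> nat \<Rightarrow> 'a set" where
  "cyc_class g e i = {g ^ i * (g ^ e) ^ k | k::nat. True}"

definition tau_circulant :: "'a::field \<Rightarrow> ('a \<Rightarrow> 'a \<Rightarrow> int) \<Rightarrow> bool" where
  "tau_circulant t N \<longleftrightarrow> (\<forall>x y k. N x y = N (x - k) (y - t * k))"

definition mat_mult :: "('a::finite \<Rightarrow> 'a \<Rightarrow> int) \<Rightarrow> ('a \<Rightarrow> 'a \<Rightarrow> int) \<Rightarrow> 'a \<Rightarrow> 'a \<Rightarrow> int" where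
  "mat_mult A B = (\<lambda>x y. \<Sum>z\<in>UNIV. A x z * B z y)"

definition zero_one_mat :: "('a \<Rightarrow> 'a \<Rightarrow> int) \<Rightarrow> bool" where
  "zero_one_mat A \<longleftrightarrow> (\<forall>x y. A x y = 0 \<or> A x y = 1)"

end

theory Submission
  imports Defs
begin

lemma fermat_ff:
  fixes x :: "'a::{finite,field}" assumes "x \<noteq> 0" shows "x ^ (CARD('a) - 1) = 1"
proof -
  let ?S = "UNIV - {0::'a}"
  have cS: "card ?S = CARD('a) - 1" by (simp add: card_Diff_singleton)
  have bij: "bij_betw (\<lambda>y. x * y) ?S ?S"
    unfolding bij_betw_def
  proof
    show "inj_on (\<lambda>y. x * y) ?S" using assms by (auto simp: inj_on_def)
    show "(\<lambda>y. x * y) ` ?S = ?S"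
    proof
      show "(\<lambda>y. x * y) ` ?S \<subseteq> ?S" using assms by auto
      show "?S \<subseteq> (\<lambda>y. x * y) ` ?S"
      proof
        fix z assume "z \<in> ?S"
        then have "z = x * (z / x)" "z / x \<in> ?S" using assms by auto
        then show "z \<in> (\<lambda>y. x * y) ` ?S" by blast
      qed
    qed
  qed
  have "prod (\<lambda>y. x * y) ?S = prod id ?S"
    using prod.reindex_bij_betw[OF bij, of id] by simp
  moreover have "prod (\<lambda>y. x * y) ?S = x ^ card ?S * prod id ?S"
    by (simp add: prod.distrib)
  moreover have "prod id ?S \<noteq> 0" by (simp add: prod_zero_iff)
  ultimately show ?thesis using cS by (metis mult_cancel_right2)
qed

lemma circ_row: "tau_circulant t N \<Longrightarrow> N x y = N 0 (y - t * x)"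
  unfolding tau_circulant_def by (metis diff_self)

locale cyc =
  fixes g :: "'a::{finite,field}" and e m :: nat
  assumes prim: "primitive_elem g" and qem: "CARD('a) - 1 = e * m"
    and epos: "0 < e" and mpos: "0 < m"
begin

abbreviation "n \<equiv> e * m"

lemma npos: "0 < n" using epos mpos by simp

lemma g0: "g \<noteq> 0" using prim by (simp add: primitive_elem_def)

lemma gn: "g ^ n = 1" using fermat_ff[OF g0] qem by simp

lemma gpow_mod: "g ^ k = g ^ (k mod n)"
proof -
  have "g ^ k = g ^ (n * (k div n) + k mod n)" by simp
  also have "\<dots> = (g ^ n) ^ (k div n) * g ^ (k mod n)" by (simp only: power_add power_mult[of g n])
  also have "\<dots> = g ^ (k mod n)" by (simp only: gn power_one mult_1_left)
  finally show ?thesis .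
qed

lemma nonzero_pow: "x \<noteq> 0 \<Longrightarrow> \<exists>t<n. x = g ^ t"
proof -
  assume "x \<noteq> 0"
  then obtain k :: nat where "x = g ^ k" using prim by (auto simp: primitive_elem_def)
  then show ?thesis using gpow_mod[of k] npos by (metis mod_less_divisor)
qed

lemma img: "(\<lambda>k. g ^ k) ` {..<n} = UNIV - {0}"
  using nonzero_pow g0 by auto

lemma inj_pow: "inj_on (\<lambda>k. g ^ k) {..<n}"
proof (rule eq_card_imp_inj_on)
  show "finite {..<n}" by simp
  show "card ((\<lambda>k. g ^ k) ` {..<n}) = card {..<n}"
    unfolding img using qem by (simp add: card_Diff_singleton)
qed

lemma cyc_eq: "cyc_class g e i = (\<lambda>k. g ^ (i + e * k)) ` {..<m}"
proof -
  have pw: "g ^ i * (g ^ e) ^ k = g ^ (i + e * k)" for k by (simp add: power_add power_mult)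
  have red: "g ^ (i + e * k) = g ^ (i + e * (k mod m))" for k
  proof -
    have "k = m * (k div m) + k mod m" by simp
    then have "e * k = n * (k div m) + e * (k mod m)"
      by (metis add_mult_distrib2 mult.assoc)
    then have "i + e * k = n * (k div m) + (i + e * (k mod m))" by linarith
    then have "g ^ (i + e * k) = (g ^ n) ^ (k div m) * g ^ (i + e * (k mod m))"
      by (simp only: power_add power_mult[of g n])
    then show ?thesis by (simp only: gn power_one mult_1_left)
  qed
  show ?thesis unfolding cyc_class_def
  proof (rule set_eqI, rule iffI)
    fix x assume "x \<in> {g ^ i * (g ^ e) ^ k |k. True}"
    then obtain k where "x = g ^ (i + e * k)" using pw by auto
    then have "x = g ^ (i + e * (k mod m))" using red by simp
    then show "x \<in> (\<lambda>k. g ^ (i + e * k)) ` {..<m}" using mpos by auto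
  next
    fix x assume "x \<in> (\<lambda>k. g ^ (i + e * k)) ` {..<m}"
    then show "x \<in> {g ^ i * (g ^ e) ^ k |k. True}" using pw by auto
  qed
qed

lemma exp_lt: "i < e \<Longrightarrow> k < m \<Longrightarrow> i + e * k < n"
proof -
  assume "i < e" "k < m"
  then have "i + e * k < e + e * k" by simp
  also have "\<dots> = e * (k + 1)" by simp
  also have "\<dots> \<le> e * m" using \<open>k < m\<close> by (intro mult_le_mono2) simp
  finally show ?thesis .
qed

lemma exp_eq: "i < e \<Longrightarrow> j < e \<Longrightarrow> k < m \<Longrightarrow> l < m \<Longrightarrow>
   g ^ (i + e * k) = g ^ (j + e * l) \<Longrightarrow> i = j \<and> k = l"
proof -
  assume a: "i < e" "j < e" "k < m" "l < m" "g ^ (i + e * k) = g ^ (j + e * l)"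
  then have "i + e * k = j + e * l"
    using inj_pow exp_lt by (auto simp: inj_on_def)
  then have "(i + e * k) mod e = (j + e * l) mod e" "(i + e * k) div e = (j + e * l) div e" by simp_all
  then show ?thesis using a epos by simp
qed

lemma card_cyc: "i < e \<Longrightarrow> card (cyc_class g e i) = m"
  unfolding cyc_eq
  by (subst card_image) (auto simp: inj_on_def dest: exp_eq)

lemma finite_cyc: "finite (cyc_class g e i)" by simp

lemma disj_cyc: "i < e \<Longrightarrow> j < e \<Longrightarrow> i \<noteq> j \<Longrightarrow> cyc_class g e i \<inter> cyc_class g e j = {}"
  unfolding cyc_eq by (auto dest: exp_eq)

lemma union_cyc: "(\<Union>i<e. cyc_class g e i) = UNIV - {0}"
proof
  show "(\<Union>i<e. cyc_class g e i) \<subseteq> UNIV - {0}" unfolding cyc_eq using g0 by auto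
  show "UNIV - {0} \<subseteq> (\<Union>i<e. cyc_class g e i)"
  proof
    fix x :: 'a assume "x \<in> UNIV - {0}"
    then obtain t where t: "t < n" "x = g ^ t" using nonzero_pow by auto
    have "t div e < m" using t(1) by (simp add: div_less_iff_less_mult mult.commute epos)
    moreover have "t = t mod e + e * (t div e)" by simp
    moreover have "t mod e < e" using epos by simp
    ultimately show "x \<in> (\<Union>i<e. cyc_class g e i)" unfolding cyc_eq using t(2)
      by (metis (no_types, lifting) UN_iff image_eqI lessThan_iff)
  qed
qed

lemma shift_cyc:
  assumes "i < e" "\<sigma> \<in> cyc_class g e i"
  shows "(\<lambda>z. \<sigma> * z) ` cyc_class g e 0 = cyc_class g e i"
proof (rule card_subset_eq)
  show "finite (cyc_class g e i)" by simp
  show "(\<lambda>z. \<sigma> * z) ` cyc_class g e 0 \<subseteq> cyc_class g e i"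
  proof
    fix x assume "x \<in> (\<lambda>z. \<sigma> * z) ` cyc_class g e 0"
    then obtain k where "x = \<sigma> * (g ^ e) ^ k" unfolding cyc_class_def by auto
    moreover obtain k0 where "\<sigma> = g ^ i * (g ^ e) ^ k0" using assms(2) unfolding cyc_class_def by auto
    ultimately have "x = g ^ i * (g ^ e) ^ (k0 + k)" by (simp add: power_add mult.assoc)
    then show "x \<in> cyc_class g e i" unfolding cyc_class_def by auto
  qed
  have s0: "\<sigma> \<noteq> 0" using assms union_cyc by blast
  have "card ((\<lambda>z. \<sigma> * z) ` cyc_class g e 0) = card (cyc_class g e 0)"
    by (rule card_image) (use s0 in \<open>auto simp: inj_on_def\<close>)
  then show "card ((\<lambda>z. \<sigma> * z) ` cyc_class g e 0) = card (cyc_class g e i)"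
    using card_cyc assms(1) epos by simp
qed

end

theorem mainTheorem7:
  fixes g :: "'a::{finite,field}" and e m :: nat and s :: 'a
    and A B :: "nat \<Rightarrow> 'a \<Rightarrow> 'a \<Rightarrow> int" and C :: "'a \<Rightarrow> 'a \<Rightarrow> int"
  assumes prim: "primitive_elem g"
    and qem: "CARD('a) - 1 = e * m" and epos: "0 < e" and mpos: "0 < m"
    and A01: "\<forall>i<e. zero_one_mat (A i)" and B01: "\<forall>i<e. zero_one_mat (B i)"
    and Arow: "\<forall>i<e. \<forall>y. A i 0 y = (if y \<in> cyc_class g e 0 then 1 else 0)"
    and Brow: "\<forall>i<e. \<forall>y. B i 0 y = (if y \<in> cyc_class g e 0 then 1 else 0)"
    and ABcirc: "\<forall>i<e. tau_circulant s (mat_mult (A i) (B i))"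
    and Bcirc: "\<forall>i<e. \<exists>si \<in> cyc_class g e i. tau_circulant si (B i)"
    and Ccirc: "tau_circulant s C"
    and Crow: "\<forall>y. C 0 y = (if y \<in> cyc_class g e 0 then 1 else 0)"
  shows "\<forall>x y. (\<Sum>i<e. mat_mult (A i) (B i) x y) + C x y = int m"
proof -
  interpret cyc g e m using prim qem epos mpos by unfold_locales
  define D where "D = cyc_class g e 0"
  define sig where "sig i = (SOME si. si \<in> cyc_class g e i \<and> tau_circulant si (B i))" for i
  have sig: "sig i \<in> cyc_class g e i \<and> tau_circulant (sig i) (B i)" if "i < e" for i
    unfolding sig_def by (rule someI_ex) (use Bcirc that in blast)
  have finD: "finite D" by simp
  have cardD: "card D = m" unfolding D_def using card_cyc epos by simp
  have row: "mat_mult (A i) (B i) 0 r = int (card {z\<in>D. r - sig i * z \<in> D})" if i: "i < e" for i r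
  proof -
    have "mat_mult (A i) (B i) 0 r = (\<Sum>z\<in>UNIV. if z \<in> D \<and> r - sig i * z \<in> D then 1 else 0)"
      unfolding mat_mult_def
    proof (rule sum.cong[OF refl])
      fix z
      have "B i z r = B i 0 (r - sig i * z)" using sig[OF i] circ_row by blast
      then show "A i 0 z * B i z r = (if z \<in> D \<and> r - sig i * z \<in> D then 1 else 0)"
        using Arow Brow i unfolding D_def by auto
    qed
    also have "\<dots> = int (card {z\<in>D. r - sig i * z \<in> D})"
      by (simp add: sum.If_cases)
    finally show ?thesis .
  qed
  have cardshift: "card {z\<in>D. r - sig i * z \<in> D} = card {u\<in>cyc_class g e i. r - u \<in> D}"
    if i: "i < e" for i r
  proof -
    have im: "(\<lambda>z. sig i * z) ` D = cyc_class g e i" unfolding D_def using shift_cyc sig i by blast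
    have s0: "sig i \<noteq> 0" using sig[OF i] union_cyc i by blast
    have eq: "(\<lambda>z. sig i * z) ` {z\<in>D. r - sig i * z \<in> D} = {u\<in>cyc_class g e i. r - u \<in> D}"
      using im by auto
    have inj: "inj_on (\<lambda>z. sig i * z) {z\<in>D. r - sig i * z \<in> D}" using s0 by (auto simp: inj_on_def)
    show ?thesis using card_image[OF inj] eq by simp
  qed
  have total: "(\<Sum>i<e. card {u\<in>cyc_class g e i. r - u \<in> D}) = card {u. u \<noteq> 0 \<and> r - u \<in> D}" for r
  proof -
    have "(\<Sum>i<e. card {u\<in>cyc_class g e i. r - u \<in> D}) = card (\<Union>i<e. {u\<in>cyc_class g e i. r - u \<in> D})"
    proof (rule card_UN_disjoint[symmetric])
      show "finite {..<e}" by simp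
      show "\<forall>i\<in>{..<e}. finite {u \<in> cyc_class g e i. r - u \<in> D}" by simp
      show "\<forall>i\<in>{..<e}. \<forall>j\<in>{..<e}. i \<noteq> j \<longrightarrow> {u \<in> cyc_class g e i. r - u \<in> D} \<inter> {u \<in> cyc_class g e j. r - u \<in> D} = {}"
      proof (intro ballI impI)
        fix i j assume "i \<in> {..<e}" "j \<in> {..<e}" "i \<noteq> j"
        then have "cyc_class g e i \<inter> cyc_class g e j = {}" using disj_cyc by simp
        then show "{u \<in> cyc_class g e i. r - u \<in> D} \<inter> {u \<in> cyc_class g e j. r - u \<in> D} = {}" by blast
      qed
    qed
    also have "(\<Union>i<e. {u\<in>cyc_class g e i. r - u \<in> D}) = (\<Union>i<e. cyc_class g e i) \<inter> {u. r - u \<in> D}"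
      by blast
    also have "\<dots> = {u. u \<noteq> 0 \<and> r - u \<in> D}"
      unfolding union_cyc by blast
    finally show ?thesis .
  qed
  have refl_card: "card {u. u \<noteq> 0 \<and> r - u \<in> D} = card (D - {r})" for r
  proof -
    have eq: "(\<lambda>u. r - u) ` {u. u \<noteq> 0 \<and> r - u \<in> D} = D - {r}"
    proof
      show "(\<lambda>u. r - u) ` {u. u \<noteq> 0 \<and> r - u \<in> D} \<subseteq> D - {r}" by auto
      show "D - {r} \<subseteq> (\<lambda>u. r - u) ` {u. u \<noteq> 0 \<and> r - u \<in> D}"
      proof
        fix w assume "w \<in> D - {r}"
        then have "w = r - (r - w)" "r - w \<in> {u. u \<noteq> 0 \<and> r - u \<in> D}" by auto
        then show "w \<in> (\<lambda>u. r - u) ` {u. u \<noteq> 0 \<and> r - u \<in> D}" by blast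
      qed
    qed
    have inj: "inj_on (\<lambda>u. r - u) {u. u \<noteq> 0 \<and> r - u \<in> D}" by (auto simp: inj_on_def)
    show ?thesis using card_image[OF inj] eq by simp
  qed
  have main0: "(\<Sum>i<e. mat_mult (A i) (B i) 0 r) + C 0 r = int m" for r
  proof -
    have "(\<Sum>i<e. mat_mult (A i) (B i) 0 r) = (\<Sum>i<e. int (card {u\<in>cyc_class g e i. r - u \<in> D}))"
      by (rule sum.cong) (auto simp: row cardshift)
    also have "\<dots> = int (card (D - {r}))" by (simp only: of_nat_sum[symmetric] total refl_card)
    finally have s: "(\<Sum>i<e. mat_mult (A i) (B i) 0 r) = int (card (D - {r}))" .
    show ?thesis
    proof (cases "r \<in> D")
      case True
      then have "card (D - {r}) = m - 1" using cardD finD by simp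
      then show ?thesis using s True Crow mpos unfolding D_def by simp
    next
      case False
      then show ?thesis using s Crow cardD unfolding D_def by simp
    qed
  qed
  show ?thesis
  proof (intro allI)
    fix x y
    have "(\<Sum>i<e. mat_mult (A i) (B i) x y) = (\<Sum>i<e. mat_mult (A i) (B i) 0 (y - s * x))"
      using ABcirc by (intro sum.cong) (auto intro: circ_row)
    moreover have "C x y = C 0 (y - s * x)" using Ccirc circ_row by blast
    ultimately show "(\<Sum>i<e. mat_mult (A i) (B i) x y) + C x y = int m" using main0 by simp
  qed
qed

end
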